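(* Let $\delta,\tau$ be positive integers with $\gcd(\delta,\tau)=1$, let $\ell\ge 1$ be an integer and let $t=\ell\tau$. Then \[ g\Big(1+\frac{\delta}{\tau},t\Big)\le \frac{\ell\delta^2+\tau+2\delta t}{2\ell\delta^2+\delta+\tau+2\delta t}. \]
   Context: Let $\mathbb{F}$ be a finite field and $x_1,\dots,x_p$ a basis of $\mathbb{F}^p$. A $[t\times m,p]$ array code is a $t\times m$ array whose entries (cells) are linear combinations of $x_1,\dots,x_p$; its columns are called servers. It has the $k$-PIR property (is a $[t\times m,p]$ $k$-PIR array code) if for every $i\in\{1,\dots,p\}$ there exist $k$ pairwise disjoint sets $S_1,\dots,S_k$ of columns such that for every $j$ the vector $x_i$ lies in the linear span of all entries of the columns in $S_j$. Its PIR rate is $k/m$. For a rational $s>1$ and a positive integer $t$ with $st$ an integer, $g(s,t)$ is the largest PIR rate $k/m$ of a $[t\times m,st]$ $k$-PIR array code (over all finite fields, all $m$ and all $k$). *)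

theory Defs
  imports Complex_Main
begin

text \<open>A [t x m, p] array code over a field 'a is represented by
  C r c, for r < t (row) and c < m (column = server), a coefficient vector
  (C r c l for l < p is the coefficient of basis vector x_l).\<close>

definition in_col_span ::
  "nat \<Rightarrow> nat \<Rightarrow> (nat \<Rightarrow> nat \<Rightarrow> nat \<Rightarrow> 'a::field) \<Rightarrow> nat set \<Rightarrow> nat \<Rightarrow> bool" where
  "in_col_span t p C S i \<longleftrightarrow>
     (\<exists>coef::nat \<Rightarrow> nat \<Rightarrow> 'a. \<forall>l<p.
        (\<Sum>r<t. \<Sum>c\<in>S. coef r c * C r c l) = (if l = i then 1 else 0))"

definition is_pir_code ::
  "nat \<Rightarrow> nat \<Rightarrow> nat \<Rightarrow> nat \<Rightarrow> (nat \<Rightarrow> nat \<Rightarrow> nat \<Rightarrow> 'a::field) \<Rightarrow> bool" where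
  "is_pir_code t m p k C \<longleftrightarrow>
     (\<forall>i<p. \<exists>S::nat \<Rightarrow> nat set.
        (\<forall>j<k. S j \<subseteq> {..<m}) \<and>
        (\<forall>j1<k. \<forall>j2<k. j1 \<noteq> j2 \<longrightarrow> S j1 \<inter> S j2 = {}) \<and>
        (\<forall>j<k. in_col_span t p C (S j) i))"

text \<open>The paper's g(s,t) is the supremum of this over all
  finite fields; an upper bound on g is thus an upper bound for every 'a.\<close>
definition pir_g :: "'a::{finite,field} itself \<Rightarrow> real \<Rightarrow> nat \<Rightarrow> real" where
  "pir_g _ s t = Sup {real k / real m | k m p (C :: nat \<Rightarrow> nat \<Rightarrow> nat \<Rightarrow> 'a).
      m \<ge> 1 \<and> real p = s * real t \<and> is_pir_code t m p k C}"

end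

theory Submission imports Defs "HOL-Library.Function_Algebras" begin


definition fscale :: "'a::field \<Rightarrow> (nat \<Rightarrow> 'a) \<Rightarrow> (nat \<Rightarrow> 'a)" where
  "fscale a f = (\<lambda>x. a * f x)"

interpretation FV: vector_space "fscale :: 'a::field \<Rightarrow> _"
  by unfold_locales (auto simp: fscale_def fun_eq_iff algebra_simps)

lemma sum_fun_apply: "(\<Sum>x\<in>A. f x) (l::nat) = (\<Sum>x\<in>A. f x l)"
  by (induction A rule: infinite_finite_induct) auto

definition vecp :: "nat \<Rightarrow> (nat \<Rightarrow> 'a::field) \<Rightarrow> nat \<Rightarrow> 'a" where
  "vecp p v = (\<lambda>l. if l < p then v l else 0)"

definition ee :: "nat \<Rightarrow> nat \<Rightarrow> 'a::field" where
  "ee i = (\<lambda>l. if l = i then 1 else 0)"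

lemma ee_inj: "inj (ee :: nat \<Rightarrow> nat \<Rightarrow> 'a::field)"
  unfolding inj_def ee_def fun_eq_iff by (metis one_neq_zero)

lemma ee_indep: "FV.independent ((ee :: nat \<Rightarrow> nat \<Rightarrow> 'a::field) ` N)"
proof -
  have "u v = 0" if A: "finite T" "T \<subseteq> ee ` N" "(\<Sum>v\<in>T. fscale (u v) v) = 0" "v \<in> T"
    for T and u :: "(nat \<Rightarrow> 'a) \<Rightarrow> 'a" and v
  proof -
    obtain j where vj: "v = (ee j :: nat \<Rightarrow> 'a)" using A(2,4) by blast
    have "0 = (\<Sum>w\<in>T. fscale (u w) w) j" using A(3) by simp
    also have "\<dots> = (\<Sum>w\<in>T. u w * w j)" by (simp add: sum_fun_apply fscale_def)
    also have "\<dots> = u v * v j + (\<Sum>w\<in>T - {v}. u w * w j)"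
      using A by (simp add: sum.remove)
    also have "(\<Sum>w\<in>T - {v}. u w * w j) = 0"
    proof (rule sum.neutral)
      show "\<forall>w\<in>T - {v}. u w * w j = 0"
      proof
        fix w assume w: "w \<in> T - {v}"
        then obtain j' where wj: "w = ee j'" using A(2) by blast
        with w vj have "j' \<noteq> j" by auto
        thus "u w * w j = 0" using wj by (simp add: ee_def)
      qed
    qed
    finally show ?thesis using vj by (simp add: ee_def)
  qed
  thus ?thesis unfolding FV.independent_explicit_module by blast
qed

lemma ics_single:
  assumes "in_col_span t p C {c} i" "i < p"
  shows "ee i \<in> FV.span ((\<lambda>r. vecp p (C r c)) ` {..<t})"
proof -
  obtain coef where co: "\<forall>l<p. (\<Sum>r<t. \<Sum>c'\<in>{c}. coef r c' * C r c' l) = (if l = i then 1 else 0)"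
    using assms(1) unfolding in_col_span_def by blast
  have "ee i = (\<Sum>r<t. fscale (coef r c) (vecp p (C r c)))"
  proof
    fix l show "ee i l = (\<Sum>r<t. fscale (coef r c) (vecp p (C r c))) l"
      using co assms(2) by (cases "l < p") (auto simp: sum_fun_apply fscale_def vecp_def ee_def)
  qed
  also have "\<dots> \<in> FV.span ((\<lambda>r. vecp p (C r c)) ` {..<t})"
    by (intro FV.span_sum FV.span_scale FV.span_base) auto
  finally show ?thesis .
qed

definition NN :: "nat \<Rightarrow> nat \<Rightarrow> (nat \<Rightarrow> nat \<Rightarrow> nat \<Rightarrow> 'a::field) \<Rightarrow> nat \<Rightarrow> nat set" where
  "NN t p C c = {i. i < p \<and> in_col_span t p C {c} i}"

lemma NN_finite: "finite (NN t p C c)" unfolding NN_def by auto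

lemma NN_le: "card (NN t p (C :: nat \<Rightarrow> nat \<Rightarrow> nat \<Rightarrow> 'a::field) c) \<le> t"
proof -
  let ?V = "(\<lambda>r. vecp p (C r c)) ` {..<t}"
  have sub: "(ee :: nat \<Rightarrow> nat \<Rightarrow> 'a) ` NN t p C c \<subseteq> FV.span ?V"
    using ics_single unfolding NN_def by blast
  have "card ((ee :: nat \<Rightarrow> nat \<Rightarrow> 'a) ` NN t p C c) \<le> card ?V"
    using FV.independent_span_bound[OF _ ee_indep sub] by auto
  also have "\<dots> \<le> t" using card_image_le[of "{..<t}"] by auto
  finally show ?thesis using card_image[OF inj_on_subset[OF ee_inj]] by (metis subset_UNIV)
qed

lemma pure_zero:
  assumes "t \<le> card (NN t p (C :: nat \<Rightarrow> nat \<Rightarrow> nat \<Rightarrow> 'a::field) c)" "r < t" "l < p"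
    "l \<notin> NN t p C c"
  shows "C r c l = 0"
proof -
  let ?V = "(\<lambda>r. vecp p (C r c)) ` {..<t}"
  let ?E = "(ee :: nat \<Rightarrow> nat \<Rightarrow> 'a) ` NN t p C c"
  have sub: "?E \<subseteq> FV.span ?V"
    using ics_single unfolding NN_def by blast
  have cE: "card ?E = card (NN t p C c)"
    using card_image[OF inj_on_subset[OF ee_inj]] by (metis subset_UNIV)
  have m: "vecp p (C r c) \<in> FV.span ?E"
  proof (rule ccontr)
    assume nm: "vecp p (C r c) \<notin> FV.span ?E"
    hence ni: "vecp p (C r c) \<notin> ?E" using FV.span_base by blast
    have ind: "FV.independent (insert (vecp p (C r c)) ?E)"
      using FV.independent_insertI[OF nm ee_indep] .
    have "insert (vecp p (C r c)) ?E \<subseteq> FV.span ?V"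
      using sub assms(2) by (auto intro: FV.span_base)
    hence "card (insert (vecp p (C r c)) ?E) \<le> card ?V"
      using FV.independent_span_bound[OF _ ind] by auto
    also have "\<dots> \<le> t" using card_image_le[of "{..<t}"] by auto
    finally show False using ni cE assms(1) card_insert_disjoint[OF finite_imageI[OF NN_finite, of ee t p C c] ni] by simp
  qed
  have subspace_ok: "FV.subspace {f. f l = 0}"
    by (rule FV.subspaceI) (auto simp: fscale_def)
  have base: "x l = 0" if "x \<in> ?E" for x
    using that assms(4) by (auto simp: ee_def)
  have "vecp p (C r c) \<in> {f. f l = 0}"
    using FV.span_induct[OF m, of "\<lambda>f. f l = 0"] subspace_ok base by simp
  thus ?thesis using assms(3) by (simp add: vecp_def)
qed




lemma per_i:
  fixes C :: "nat \<Rightarrow> nat \<Rightarrow> nat \<Rightarrow> 'a::field"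
  assumes pir: "is_pir_code t m p k C" and ip: "i < p"
  shows "k \<le> card {c\<in>{..<m}. i \<in> NN t p C c}
             + card {c\<in>{..<m}. \<not> t \<le> card (NN t p C c) \<and> i \<notin> NN t p C c}"
    and "2*k \<le> m + card {c\<in>{..<m}. i \<in> NN t p C c}"
proof -
  obtain S where S1: "\<forall>j<k. S j \<subseteq> {..<m}"
    and S2: "\<forall>j1<k. \<forall>j2<k. j1 \<noteq> j2 \<longrightarrow> S j1 \<inter> S j2 = {}"
    and S3: "\<forall>j<k. in_col_span t p C (S j) i"
  proof -
    have "\<exists>S::nat \<Rightarrow> nat set. (\<forall>j<k. S j \<subseteq> {..<m}) \<and>
        (\<forall>j1<k. \<forall>j2<k. j1 \<noteq> j2 \<longrightarrow> S j1 \<inter> S j2 = {}) \<and>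
        (\<forall>j<k. in_col_span t p C (S j) i)"
      using pir ip unfolding is_pir_code_def by (elim allE impE) 
    thus ?thesis using that by (elim exE conjE) 
  qed
  define D where "D = {c\<in>{..<m}. i \<in> NN t p C c}"
  define Q where "Q = {c\<in>{..<m}. \<not> t \<le> card (NN t p C c) \<and> i \<notin> NN t p C c}"
  define T1 where "T1 = {j\<in>{..<k}. \<exists>c\<in>S j. i \<in> NN t p C c}"
  define T2 where "T2 = {j\<in>{..<k}. \<not> (\<exists>c\<in>S j. i \<in> NN t p C c)}"
  have fD: "finite D" unfolding D_def by auto
  have fQ: "finite Q" unfolding Q_def by auto
  have kk: "k = card T1 + card T2"
  proof -
    have "T1 \<union> T2 = {..<k}" "T1 \<inter> T2 = {}" unfolding T1_def T2_def by auto
    thus ?thesis using card_Un_disjoint[of T1 T2] unfolding T1_def T2_def by auto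
  qed
  have K2: "\<exists>c\<in>S j. \<not> t \<le> card (NN t p C c)" if j: "j \<in> T2" for j
  proof (rule ccontr)
    assume "\<not> ?thesis"
    hence allp: "\<forall>c\<in>S j. t \<le> card (NN t p C c)" by blast
    have jk: "j < k" and ni: "\<forall>c\<in>S j. i \<notin> NN t p C c" using j unfolding T2_def by auto
    obtain coef where co: "\<forall>l<p. (\<Sum>r<t. \<Sum>c\<in>S j. coef r c * C r c l) = (if l = i then 1 else 0)"
      using S3[rule_format, OF jk] unfolding in_col_span_def by (elim exE)
    have "(\<Sum>r<t. \<Sum>c\<in>S j. coef r c * C r c i) = 0"
      using pure_zero[of t p C _ _ i] allp ni ip by (intro sum.neutral) auto
    moreover have "(\<Sum>r<t. \<Sum>c\<in>S j. coef r c * C r c i) = 1" using co ip by auto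
    ultimately show False by simp
  qed
  have K3: "2 \<le> card (S j)" if j: "j \<in> T2" for j
  proof -
    have jk: "j < k" and ni: "\<forall>c\<in>S j. i \<notin> NN t p C c" using j unfolding T2_def by auto
    have fin: "finite (S j)" using S1 jk finite_subset by blast
    have ne: "S j \<noteq> {}"
    proof
      assume e: "S j = {}"
      obtain coef where co: "\<forall>l<p. (\<Sum>r<t. \<Sum>c\<in>S j. coef r c * C r c l) = (if l = i then 1 else 0)"
        using S3[rule_format, OF jk] unfolding in_col_span_def by (elim exE)
      thus False using e ip by auto
    qed
    have ns: "S j \<noteq> {c}" for c
    proof
      assume e: "S j = {c}"
      hence "in_col_span t p C {c} i" using S3 jk by metis
      hence "i \<in> NN t p C c" using ip unfolding NN_def by auto
      thus False using ni e by auto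
    qed
    show ?thesis
    proof (rule ccontr)
      assume "\<not> ?thesis"
      hence "card (S j) = 0 \<or> card (S j) = 1" by linarith
      thus False using fin ne ns card_1_singletonE by (metis card_0_eq)
    qed
  qed
  have c1: "card T1 \<le> card D"
  proof -
    define f where "f j = (SOME c. c \<in> S j \<and> i \<in> NN t p C c)" for j
    have f1: "f j \<in> S j \<and> i \<in> NN t p C (f j)" if "j \<in> T1" for j
      using that unfolding T1_def f_def by (metis (mono_tags, lifting) mem_Collect_eq someI_ex)
    have "inj_on f T1"
    proof (rule inj_onI)
      fix a b assume ab: "a \<in> T1" "b \<in> T1" "f a = f b"
      show "a = b"
      proof (rule ccontr)
        assume "a \<noteq> b"
        hence "S a \<inter> S b = {}" using S2 ab unfolding T1_def by auto
        thus False using f1[OF ab(1)] f1[OF ab(2)] ab(3) by auto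
      qed
    qed
    moreover have "f ` T1 \<subseteq> D" using f1 S1 unfolding D_def T1_def by auto
    ultimately show ?thesis using card_inj_on_le fD by blast
  qed
  have c2: "card T2 \<le> card Q"
  proof -
    define f where "f j = (SOME c. c \<in> S j \<and> \<not> t \<le> card (NN t p C c))" for j
    have f1: "f j \<in> S j \<and> \<not> t \<le> card (NN t p C (f j))" if "j \<in> T2" for j
      using K2[OF that] unfolding f_def by (metis (mono_tags, lifting) someI_ex)
    have "inj_on f T2"
    proof (rule inj_onI)
      fix a b assume ab: "a \<in> T2" "b \<in> T2" "f a = f b"
      show "a = b"
      proof (rule ccontr)
        assume "a \<noteq> b"
        hence "S a \<inter> S b = {}" using S2 ab unfolding T2_def by auto
        thus False using f1[OF ab(1)] f1[OF ab(2)] ab(3) by auto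
      qed
    qed
    moreover have "f ` T2 \<subseteq> Q" using f1 S1 unfolding Q_def T2_def by fastforce
    ultimately show ?thesis using card_inj_on_le fQ by blast
  qed
  have c3: "2 * card T2 \<le> m - card D"
  proof -
    have fT2: "finite T2" unfolding T2_def by auto
    have "2 * card T2 = (\<Sum>j\<in>T2. 2)" by simp
    also have "\<dots> \<le> (\<Sum>j\<in>T2. card (S j))" using K3 by (intro sum_mono) auto
    also have "\<dots> = card (\<Union>j\<in>T2. S j)"
    proof (rule card_UN_disjoint[symmetric])
      show "finite T2" by fact
      show "\<forall>j\<in>T2. finite (S j)" using S1 finite_subset unfolding T2_def by blast
      show "\<forall>a\<in>T2. \<forall>b\<in>T2. a \<noteq> b \<longrightarrow> S a \<inter> S b = {}" using S2 unfolding T2_def by auto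
    qed
    also have "\<dots> \<le> card ({..<m} - D)"
      by (rule card_mono) (use S1 in \<open>auto simp: T2_def D_def\<close>)
    also have "\<dots> = m - card D" by (subst card_Diff_subset) (auto simp: D_def)
    finally show ?thesis .
  qed
  have cDm: "card D \<le> m" using card_mono[of "{..<m}" D] unfolding D_def by auto
  show "k \<le> card {c\<in>{..<m}. i \<in> NN t p C c}
             + card {c\<in>{..<m}. \<not> t \<le> card (NN t p C c) \<and> i \<notin> NN t p C c}"
    using kk c1 c2 unfolding D_def Q_def by linarith
  show "2*k \<le> m + card {c\<in>{..<m}. i \<in> NN t p C c}"
    using kk c1 c3 cDm unfolding D_def by linarith
qed




lemma card_sum_if: "finite A \<Longrightarrow> card {c\<in>A. P c} = (\<Sum>c\<in>A. if P c then 1 else 0::nat)"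
  by (simp add: sum.If_cases Int_def conj_commute)

lemma core:
  fixes C :: "nat \<Rightarrow> nat \<Rightarrow> nat \<Rightarrow> 'a::field"
  assumes pir: "is_pir_code t m p k C" and tp: "t \<le> p" and t1: "1 \<le> t"
  shows "p * k + (p - t) * (2 * p * k) \<le> m * (t * (p - t + 1)) + (p - t) * (p * m)"
proof -
  let ?N = "\<lambda>c. NN t p C c"
  let ?pure = "\<lambda>c. t \<le> card (?N c)"
  let ?X = "\<lambda>c. if ?pure c then card (?N c) else p"
  have Nsub: "?N c \<subseteq> {..<p}" for c unfolding NN_def by auto
  have dsum: "card {c\<in>{..<m}. i \<in> ?N c} = (\<Sum>c<m. if i \<in> ?N c then 1 else 0)" for i
    by (rule card_sum_if) auto
  have qsum: "card {c\<in>{..<m}. \<not> ?pure c \<and> i \<notin> ?N c} = (\<Sum>c<m. if \<not> ?pure c \<and> i \<notin> ?N c then 1 else 0)" for i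
    by (rule card_sum_if) auto
  have cN: "(\<Sum>i<p. if i \<in> ?N c then 1 else 0) = card (?N c)" for c
  proof -
    have "card (?N c) = card {i\<in>{..<p}. i \<in> ?N c}"
      using Nsub[of c] by (intro arg_cong[where f=card]) auto
    thus ?thesis using card_sum_if[of "{..<p}" "\<lambda>i. i \<in> ?N c"] by simp
  qed
  have A: "p * k \<le> (\<Sum>c<m. ?X c)"
  proof -
    have "p * k = (\<Sum>i<p. k)" by simp
    also have "\<dots> \<le> (\<Sum>i<p. card {c\<in>{..<m}. i \<in> ?N c} + card {c\<in>{..<m}. \<not> ?pure c \<and> i \<notin> ?N c})"
      using per_i(1)[OF pir] by (intro sum_mono) auto
    also have "\<dots> = (\<Sum>i<p. \<Sum>c<m. (if i \<in> ?N c then 1 else 0) + (if \<not> ?pure c \<and> i \<notin> ?N c then 1 else 0))"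
      by (simp only: dsum qsum sum.distrib)
    also have "\<dots> = (\<Sum>c<m. \<Sum>i<p. (if i \<in> ?N c then 1 else 0) + (if \<not> ?pure c \<and> i \<notin> ?N c then 1 else 0))"
      by (rule sum.swap)
    also have "\<dots> = (\<Sum>c<m. ?X c)"
    proof (rule sum.cong[OF refl])
      fix c
      show "(\<Sum>i<p. (if i \<in> ?N c then 1 else 0) + (if \<not> ?pure c \<and> i \<notin> ?N c then 1 else 0)) = ?X c"
      proof (cases "?pure c")
        case True
        thus ?thesis using cN[of c] by simp
      next
        case False
        have "(\<Sum>i<p. (if i \<in> ?N c then 1 else 0) + (if \<not> ?pure c \<and> i \<notin> ?N c then 1 else 0)) = (\<Sum>i<p. (1::nat))"
          using False by (intro sum.cong) auto
        thus ?thesis using False by simp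
      qed
    qed
    finally show ?thesis .
  qed
  have B: "p * (2 * k) \<le> p * m + (\<Sum>c<m. card (?N c))"
  proof -
    have "p * (2 * k) = (\<Sum>i<p. 2 * k)" by simp
    also have "\<dots> \<le> (\<Sum>i<p. m + card {c\<in>{..<m}. i \<in> ?N c})"
      using per_i(2)[OF pir] by (intro sum_mono) auto
    also have "\<dots> = p * m + (\<Sum>i<p. \<Sum>c<m. if i \<in> ?N c then 1 else 0)"
      by (simp only: dsum sum.distrib sum_constant card_lessThan of_nat_id)
    also have "(\<Sum>i<p. \<Sum>c<m. if i \<in> ?N c then 1 else 0) = (\<Sum>c<m. \<Sum>i<p. if i \<in> ?N c then 1 else 0)"
      by (rule sum.swap)
    also have "\<dots> = (\<Sum>c<m. card (?N c))"
    proof (rule sum.cong[OF refl])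
      fix c
      have "card (?N c) = card {i\<in>{..<p}. i \<in> ?N c}"
        using Nsub[of c] by (intro arg_cong[where f=card]) auto
      thus "(\<Sum>i<p. if i \<in> ?N c then 1 else 0) = card (?N c)"
        using card_sum_if[of "{..<p}" "\<lambda>i. i \<in> ?N c"] by simp
    qed
    finally show ?thesis by simp
  qed
  have col: "?X c + (p - t) * card (?N c) \<le> t * (p - t + 1)" for c
  proof -
    obtain e where pe: "p = t + e" using tp le_Suc_ex by blast
    have nt: "card (?N c) \<le> t" by (rule NN_le)
    show ?thesis
    proof (cases "?pure c")
      case True
      have "e * card (?N c) \<le> e * t" using nt by simp
      thus ?thesis using True nt pe by (simp add: algebra_simps)
    next
      case False
      hence "card (?N c) \<le> t - 1" by simp
      hence h1: "e * card (?N c) \<le> e * (t - 1)" by simp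
      have h2: "e * (t - 1) + e = e * t" using t1 by (cases t) (auto simp: algebra_simps)
      have "p + e * card (?N c) \<le> t * (e + 1)" using h1 h2 pe by (simp add: algebra_simps)
      thus ?thesis using False pe by (simp add: algebra_simps)
    qed
  qed
  have "p * k + (p - t) * (2 * p * k) \<le> (\<Sum>c<m. ?X c) + (p - t) * (p * m + (\<Sum>c<m. card (?N c)))"
    using A mult_le_mono2[OF B, of "p - t"] by (simp add: algebra_simps)
  also have "\<dots> = (\<Sum>c<m. ?X c + (p - t) * card (?N c)) + (p - t) * (p * m)"
    by (simp add: algebra_simps sum.distrib sum_distrib_left)
  also have "\<dots> \<le> (\<Sum>c<m. t * (p - t + 1)) + (p - t) * (p * m)"
    using col by (intro add_mono sum_mono) auto
  finally show ?thesis by simp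
qed




theorem corollary1:
  fixes \<delta> \<tau> l :: nat
  assumes "\<delta> > 0" and "\<tau> > 0" and "gcd \<delta> \<tau> = 1" and "l \<ge> 1"
  shows "pir_g TYPE('a::{finite,field}) (1 + real \<delta> / real \<tau>) (l * \<tau>)
     \<le> (real l * real \<delta>^2 + real \<tau> + 2 * real \<delta> * real (l * \<tau>))
        / (2 * real l * real \<delta>^2 + real \<delta> + real \<tau> + 2 * real \<delta> * real (l * \<tau>))"
proof -
  let ?A = "real l * real \<delta>^2 + real \<tau> + 2 * real \<delta> * real (l * \<tau>)"
  let ?B = "2 * real l * real \<delta>^2 + real \<delta> + real \<tau> + 2 * real \<delta> * real (l * \<tau>)"
  let ?X = "{real k / real m | k m p (C :: nat \<Rightarrow> nat \<Rightarrow> nat \<Rightarrow> 'a).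
      m \<ge> 1 \<and> real p = (1 + real \<delta> / real \<tau>) * real (l * \<tau>) \<and> is_pir_code (l * \<tau>) m p k C}"
  have peq: "real p = (1 + real \<delta> / real \<tau>) * real (l * \<tau>) \<longleftrightarrow> p = l * (\<tau> + \<delta>)" for p
  proof -
    have "(1 + real \<delta> / real \<tau>) * real (l * \<tau>) = real (l * (\<tau> + \<delta>))"
      using assms(2) by (simp add: field_simps)
    thus ?thesis by (metis of_nat_eq_iff)
  qed
  have ne: "?X \<noteq> {}"
  proof -
    have "real 0 / real 1 \<in> ?X"
      using peq[of "l * (\<tau> + \<delta>)"]
      by (intro CollectI exI[of _ 0] exI[of _ 1] exI[of _ "l * (\<tau> + \<delta>)"]
          exI[of _ "\<lambda>_ _ _. 0 :: 'a"]) (simp add: is_pir_code_def)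
    thus ?thesis by blast
  qed
  have bound: "x \<le> ?A / ?B" if xX: "x \<in> ?X" for x
  proof -
    obtain k m p and C :: "nat \<Rightarrow> nat \<Rightarrow> nat \<Rightarrow> 'a" where x: "x = real k / real m" and m1: "m \<ge> 1"
      and pp: "real p = (1 + real \<delta> / real \<tau>) * real (l * \<tau>)" and pir: "is_pir_code (l * \<tau>) m p k C"
      using xX by blast
    have p: "p = l * (\<tau> + \<delta>)" using pp peq by blast
    have tp: "l * \<tau> \<le> p" using p by simp
    have t1: "1 \<le> l * \<tau>" using assms by simp
    have pt: "p - l * \<tau> = l * \<delta>" using p by (simp add: algebra_simps)
    have c: "p * k + (l * \<delta>) * (2 * p * k) \<le> m * ((l * \<tau>) * (l * \<delta> + 1)) + (l * \<delta>) * (p * m)"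
      using core[OF pir tp t1] pt by simp
    hence c': "real (p * k + (l * \<delta>) * (2 * p * k)) \<le> real (m * ((l * \<tau>) * (l * \<delta> + 1)) + (l * \<delta>) * (p * m))"
      by (simp only: of_nat_le_iff)
    have e1: "real (p * k + (l * \<delta>) * (2 * p * k)) = real l * (real k * ?B)"
      unfolding p by (simp add: algebra_simps power2_eq_square)
    have e2: "real (m * ((l * \<tau>) * (l * \<delta> + 1)) + (l * \<delta>) * (p * m)) = real l * (?A * real m)"
      unfolding p by (simp add: algebra_simps power2_eq_square)
    have lpos: "real l > 0" using assms by simp
    have "real k * ?B \<le> ?A * real m" using c' e1 e2 lpos by (metis mult_le_cancel_left_pos)
    moreover have "?B > 0" using assms by (intro add_pos_nonneg add_nonneg_pos) auto
    moreover have "real m > 0" using m1 by simp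
    ultimately show ?thesis unfolding x by (simp add: divide_le_eq le_divide_eq field_simps)
  qed
  show ?thesis unfolding pir_g_def by (rule cSup_least[OF ne bound])
qed


end
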